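(* Fix a positive integer $n$, a nonzero $n$-partition $\lambda$ with $\lambda_n=0$, an $n$-semistandard tableau $T$ of shape $\lambda$, a column $1\le l<\lambda_1$, and a location $(j,i)>(l,1)$ in reading order. If $1\le h<k\le c_l$, then the most recent value of $P(T;l,h)$ relative to $(j,i)$ is strictly smaller than the most recent value of $P(T;l,k)$ relative to $(j,i)$. (That is, the most recent value of $P(T;l,k)$ relative to $(j,i)$ decreases as $k$ decreases.)
   Context: Identify $\lambda=(\lambda_1,\dots,\lambda_n)$ (weakly decreasing nonnegative integers, $\lambda_n=0$, $\lambda\ne0$) with its Young diagram; $c_j$ is the length of column $j$; $(j,i)$ is the box in column $j$, row $i$. Reading order: $(l,k)\le(j,i)$ iff $l<j$, or $l=j$ and $k\ge i$. An $n$-semistandard tableau $T$ of shape $\lambda$ has entries in $[n]$, weakly increasing along rows, strictly increasing down columns; $T(j,i)$ is its entry. The EWIS of a sequence $x_1,x_2,\dots$ is $x_{a_1},x_{a_2},\dots$ with $a_1=1$ and $a_b$ the smallest index $>a_{b-1}$ with $x_{a_b}\ge x_{a_{b-1}}$. Scanning paths: for each column $l$ and $k=c_l,c_l-1,\dots,1$ in turn, delete the boxes of the previously computed $P(T;l,k')$, $k'>k$ (leaving a semistandard tableau of valid shape); form the sequence of entries in the lowest box of each of columns $l,\dots,\lambda_1$ of the current shape (skipping empty columns); $P(T;l,k)$ is the set of locations of the terms of its EWIS (it starts at $(l,k)$). For $(j,i)>(l,1)$, the most recent location of $P(T;l,k)$ relative to $(j,i)$ is the latest location (in reading order) of $P(T;l,k)$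 strictly before $(j,i)$, and the most recent value is the entry of $T$ there. *)

theory Defs
  imports Main
begin

text \<open>Partitions are functions lam :: nat => nat, meaningful on rows 1..n.
  A box is a pair (column j, row i).\<close>

definition is_partition :: "nat \<Rightarrow> (nat \<Rightarrow> nat) \<Rightarrow> bool" where
  "is_partition n lam \<longleftrightarrow>
     (\<forall>i. 1 \<le> i \<and> i < n \<longrightarrow> lam (Suc i) \<le> lam i) \<and> lam n = 0 \<and>
     (\<exists>i\<in>{1..n}. lam i \<noteq> 0)"

definition boxes :: "nat \<Rightarrow> (nat \<Rightarrow> nat) \<Rightarrow> (nat \<times> nat) set" where
  "boxes n lam = {(j, i). 1 \<le> i \<and> i \<le> n \<and> 1 \<le> j \<and> j \<le> lam i}"

definition col_len :: "nat \<Rightarrow> (nat \<Rightarrow> nat) \<Rightarrow> nat \<Rightarrow> nat" where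
  "col_len n lam j = card {i. (j, i) \<in> boxes n lam}"

text \<open>T j i is the entry in column j, row i.\<close>
definition semistandard :: "nat \<Rightarrow> (nat \<Rightarrow> nat) \<Rightarrow> (nat \<Rightarrow> nat \<Rightarrow> nat) \<Rightarrow> bool" where
  "semistandard n lam T \<longleftrightarrow>
     (\<forall>(j, i)\<in>boxes n lam. 1 \<le> T j i \<and> T j i \<le> n) \<and>
     (\<forall>j i. (j, i) \<in> boxes n lam \<and> (Suc j, i) \<in> boxes n lam \<longrightarrow> T j i \<le> T (Suc j) i) \<and>
     (\<forall>j i. (j, i) \<in> boxes n lam \<and> (j, Suc i) \<in> boxes n lam \<longrightarrow> T j i < T j (Suc i))"

definition rd_less :: "nat \<times> nat \<Rightarrow> nat \<times> nat \<Rightarrow> bool" where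
  "rd_less p q \<longleftrightarrow> fst p < fst q \<or> (fst p = fst q \<and> snd p > snd q)"

text \<open>Earliest weakly increasing subsequence of a list of (location, value) pairs;
  returns the locations of its terms.\<close>
fun ewis_aux :: "nat \<Rightarrow> ('a \<times> nat) list \<Rightarrow> 'a list" where
  "ewis_aux v [] = []"
| "ewis_aux v ((p, x) # xs) = (if v \<le> x then p # ewis_aux x xs else ewis_aux v xs)"

fun ewis :: "('a \<times> nat) list \<Rightarrow> 'a list" where
  "ewis [] = []"
| "ewis ((p, x) # xs) = p # ewis_aux x xs"

definition lowest :: "(nat \<times> nat) set \<Rightarrow> nat \<Rightarrow> nat" where
  "lowest B j = Max {i. (j, i) \<in> B}"

definition scan_seq :: "(nat \<Rightarrow> nat) \<Rightarrow> (nat \<Rightarrow> nat \<Rightarrow> nat) \<Rightarrow> (nat \<times> nat) set \<Rightarrow> nat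
    \<Rightarrow> ((nat \<times> nat) \<times> nat) list" where
  "scan_seq lam T B l =
     map (\<lambda>j. ((j, lowest B j), T j (lowest B j)))
         (filter (\<lambda>j. \<exists>i. (j, i) \<in> B) [l..<Suc (lam 1)])"

definition scan_path_of :: "(nat \<Rightarrow> nat) \<Rightarrow> (nat \<Rightarrow> nat \<Rightarrow> nat) \<Rightarrow> (nat \<times> nat) set \<Rightarrow> nat
    \<Rightarrow> (nat \<times> nat) set" where
  "scan_path_of lam T B l = set (ewis (scan_seq lam T B l))"

text \<open>removed n lam T l m: union of the first m scanning paths of column l,
  i.e. of P(T;l,k') for k' = c_l, ..., c_l - m + 1.\<close>
fun removed :: "nat \<Rightarrow> (nat \<Rightarrow> nat) \<Rightarrow> (nat \<Rightarrow> nat \<Rightarrow> nat) \<Rightarrow> nat \<Rightarrow> nat \<Rightarrow> (nat \<times> nat) set" where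
  "removed n lam T l 0 = {}"
| "removed n lam T l (Suc m) =
     removed n lam T l m \<union> scan_path_of lam T (boxes n lam - removed n lam T l m) l"

definition scan_path :: "nat \<Rightarrow> (nat \<Rightarrow> nat) \<Rightarrow> (nat \<Rightarrow> nat \<Rightarrow> nat) \<Rightarrow> nat \<Rightarrow> nat
    \<Rightarrow> (nat \<times> nat) set" where
  "scan_path n lam T l k =
     scan_path_of lam T (boxes n lam - removed n lam T l (col_len n lam l - k)) l"

definition most_recent_loc :: "(nat \<times> nat) set \<Rightarrow> nat \<times> nat \<Rightarrow> nat \<times> nat" where
  "most_recent_loc P q =
     (THE p. p \<in> P \<and> rd_less p q \<and> (\<forall>p'\<in>P. rd_less p' q \<longrightarrow> p' = p \<or> rd_less p' p))"

definition most_recent_val :: "(nat \<Rightarrow> nat \<Rightarrow> nat) \<Rightarrow> (nat \<times> nat) set \<Rightarrow> nat \<times> nat \<Rightarrow> nat" where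
  "most_recent_val T P q = (case most_recent_loc P q of (a, b) \<Rightarrow> T a b)"

end

theory Submission
  imports Defs
begin

definition ne :: "(nat \<times> nat) set \<Rightarrow> nat \<Rightarrow> bool" where
  "ne B j \<longleftrightarrow> (\<exists>i. (j, i) \<in> B)"

definition val :: "(nat \<Rightarrow> nat \<Rightarrow> nat) \<Rightarrow> (nat \<times> nat) set \<Rightarrow> nat \<Rightarrow> nat" where
  "val T B j = T j (lowest B j)"

fun rv :: "nat \<Rightarrow> ('a \<times> nat) list \<Rightarrow> nat" where
  "rv v [] = v"
| "rv v ((p, x) # xs) = rv (if v \<le> x then x else v) xs"

lemma ewis_aux_snoc:
  "ewis_aux v (xs @ [(p, x)]) = ewis_aux v xs @ (if rv v xs \<le> x then [p] else [])"
  by (induction v xs rule: ewis_aux.induct) auto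

lemma rv_snoc:
  "rv v (xs @ [(p, x)]) = (if rv v xs \<le> x then x else rv v xs)"
  by (induction v xs rule: ewis_aux.induct) auto

fun F :: "(nat \<Rightarrow> nat \<Rightarrow> nat) \<Rightarrow> (nat \<times> nat) set \<Rightarrow> nat \<Rightarrow> nat \<Rightarrow> nat" where
  "F T B l 0 = val T B l"
| "F T B l (Suc m) = (if Suc m \<le> l then val T B l
     else if ne B (Suc m) \<and> F T B l m \<le> val T B (Suc m) then val T B (Suc m) else F T B l m)"

definition inP :: "(nat \<Rightarrow> nat \<Rightarrow> nat) \<Rightarrow> (nat \<times> nat) set \<Rightarrow> nat \<Rightarrow> nat \<Rightarrow> bool" where
  "inP T B l m \<longleftrightarrow> ne B m \<and> (m = l \<or> (l < m \<and> F T B l (m - 1) \<le> val T B m))"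

lemma F_le: "m \<le> l \<Longrightarrow> F T B l m = val T B l"
  by (cases m) auto

lemma F_Suc_gt: "l \<le> m \<Longrightarrow> F T B l (Suc m) =
   (if ne B (Suc m) \<and> F T B l m \<le> val T B (Suc m) then val T B (Suc m) else F T B l m)"
  by simp

lemma path_char:
  fixes T :: "nat \<Rightarrow> nat \<Rightarrow> nat" and B :: "(nat \<times> nat) set"
  defines "g \<equiv> (\<lambda>j. ((j, lowest B j), T j (lowest B j)))"
  assumes "l \<le> m"
  shows "rv (val T B l) (map g (filter (ne B) [Suc l..<Suc m])) = F T B l m \<and>
    set (ewis_aux (val T B l) (map g (filter (ne B) [Suc l..<Suc m])))
      = {(c, lowest B c) | c. l < c \<and> c \<le> m \<and> inP T B l c}"
  using assms(2)
proof (induction m rule: dec_induct)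
  case base
  then show ?case by (simp add: F_le)
next
  case (step k)
  have fl: "filter (ne B) [Suc l..<Suc (Suc k)] = filter (ne B) [Suc l..<Suc k] @
      (if ne B (Suc k) then [Suc k] else [])"
    using step.hyps by simp
  have ip: "inP T B l (Suc k) \<longleftrightarrow> ne B (Suc k) \<and> F T B l k \<le> val T B (Suc k)"
    using step.hyps unfolding inP_def by auto
  have setE: "{(c, lowest B c) | c. l < c \<and> c \<le> Suc k \<and> inP T B l c}
     = {(c, lowest B c) | c. l < c \<and> c \<le> k \<and> inP T B l c} \<union>
       (if inP T B l (Suc k) then {(Suc k, lowest B (Suc k))} else {})"
    using step.hyps by (auto simp: le_Suc_eq)
  show ?case
  proof (cases "ne B (Suc k)")
    case True
    then show ?thesis using step.IH step.hyps
      by (simp add: fl g_def rv_snoc ewis_aux_snoc setE ip val_def)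
  next
    case False
    then show ?thesis using step.IH step.hyps
      by (simp add: fl setE ip)
  qed
qed

lemma scan_path_char:
  assumes "ne B l" "l \<le> lam 1"
  shows "scan_path_of lam T B l = {(c, lowest B c) | c. l \<le> c \<and> c \<le> lam 1 \<and> inP T B l c}"
proof -
  define g where "g = (\<lambda>j. ((j, lowest B j), T j (lowest B j)))"
  have ff: "(\<lambda>j. \<exists>i. (j, i) \<in> B) = ne B" by (simp add: ne_def fun_eq_iff)
  have up: "[l..<Suc (lam 1)] = l # [Suc l..<Suc (lam 1)]"
    using assms(2) by (simp add: upt_conv_Cons)
  have seq: "scan_seq lam T B l = g l # map g (filter (ne B) [Suc l..<Suc (lam 1)])"
    unfolding scan_seq_def ff up g_def using assms(1) by simp
  have "scan_path_of lam T B l = insert (l, lowest B l)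
     (set (ewis_aux (val T B l) (map g (filter (ne B) [Suc l..<Suc (lam 1)]))))"
    unfolding scan_path_of_def seq by (simp add: g_def val_def)
  also have "\<dots> = insert (l, lowest B l) {(c, lowest B c) | c. l < c \<and> c \<le> lam 1 \<and> inP T B l c}"
    using path_char[where l=l and m="lam 1" and B=B and T=T] assms g_def by simp
  also have "\<dots> = {(c, lowest B c) | c. l \<le> c \<and> c \<le> lam 1 \<and> inP T B l c}"
    using assms by (auto simp: inP_def order_le_less)
  finally show ?thesis .
qed

lemma F_last:
  assumes "ne B l" "l \<le> m"
  shows "\<exists>m0. l \<le> m0 \<and> m0 \<le> m \<and> inP T B l m0 \<and> F T B l m = val T B m0 \<and>
     (\<forall>m1. m0 < m1 \<and> m1 \<le> m \<longrightarrow> \<not> inP T B l m1)"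
  using assms(2)
proof (induction m rule: dec_induct)
  case base
  then show ?case using assms(1) by (intro exI[of _ l]) (auto simp: inP_def F_le)
next
  case (step k)
  have ip: "inP T B l (Suc k) \<longleftrightarrow> ne B (Suc k) \<and> F T B l k \<le> val T B (Suc k)"
    using step.hyps unfolding inP_def by auto
  show ?case
  proof (cases "inP T B l (Suc k)")
    case True
    then show ?thesis using step.hyps ip by (intro exI[of _ "Suc k"]) auto
  next
    case False
    then obtain m0 where "l \<le> m0 \<and> m0 \<le> k \<and> inP T B l m0 \<and> F T B l k = val T B m0 \<and>
     (\<forall>m1. m0 < m1 \<and> m1 \<le> k \<longrightarrow> \<not> inP T B l m1)" using step.IH by blast
    then show ?thesis using False ip step.hyps
      by (intro exI[of _ m0]) (auto simp: le_Suc_eq)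
  qed
qed

lemma F_mono1: "l \<le> m \<Longrightarrow> F T B l m \<le> F T B l (Suc m)"
  by auto

lemma F_mono: assumes "l \<le> m" "m \<le> m'" shows "F T B l m \<le> F T B l m'"
  using assms(2)
proof (induction m' rule: dec_induct)
  case base then show ?case by simp
next
  case (step k)
  then show ?case using F_mono1[of l k T B] assms(1) by linarith
qed

lemma rd_asym: "rd_less a b \<Longrightarrow> \<not> rd_less b a"
  unfolding rd_less_def by auto

lemma mrl_eq:
  assumes "p0 \<in> P" "rd_less p0 q" "\<forall>p'\<in>P. rd_less p' q \<longrightarrow> p' = p0 \<or> rd_less p' p0"
  shows "most_recent_loc P q = p0"
  unfolding most_recent_loc_def
proof (rule the_equality)
  show "p0 \<in> P \<and> rd_less p0 q \<and> (\<forall>p'\<in>P. rd_less p' q \<longrightarrow> p' = p0 \<or> rd_less p' p0)"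
    using assms by blast
next
  fix p assume h: "p \<in> P \<and> rd_less p q \<and> (\<forall>p'\<in>P. rd_less p' q \<longrightarrow> p' = p \<or> rd_less p' p)"
  then have "p = p0 \<or> rd_less p p0" using assms by blast
  moreover have "p0 = p \<or> rd_less p0 p" using h assms by blast
  ultimately show "p = p0" using rd_asym by blast
qed

definition MV :: "(nat \<Rightarrow> nat \<Rightarrow> nat) \<Rightarrow> (nat \<times> nat) set \<Rightarrow> nat \<Rightarrow> nat \<Rightarrow> nat \<Rightarrow> nat" where
  "MV T B l j i = (if inP T B l j \<and> i < lowest B j then F T B l j else F T B l (j - 1))"

lemma mrv_MV:
  assumes "ne B l" "l < j" "j \<le> lam 1"
  shows "most_recent_val T (scan_path_of lam T B l) (j, i) = MV T B l j i"
proof -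
  let ?P = "scan_path_of lam T B l"
  have P: "?P = {(c, lowest B c) | c. l \<le> c \<and> c \<le> lam 1 \<and> inP T B l c}"
    using scan_path_char[of B l lam T] assms by simp
  show ?thesis
  proof (cases "inP T B l j \<and> i < lowest B j")
    case True
    have "most_recent_loc ?P (j, i) = (j, lowest B j)"
    proof (rule mrl_eq)
      show "(j, lowest B j) \<in> ?P" using P True assms by auto
      show "rd_less (j, lowest B j) (j, i)" using True by (simp add: rd_less_def)
      show "\<forall>p'\<in>?P. rd_less p' (j, i) \<longrightarrow> p' = (j, lowest B j) \<or> rd_less p' (j, lowest B j)"
        unfolding P by (auto simp: rd_less_def)
    qed
    moreover have "F T B l j = val T B j"
      using True assms by (cases j) (auto simp: inP_def)
    ultimately show ?thesis using True by (simp add: most_recent_val_def MV_def val_def)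
  next
    case False
    have "l \<le> j - 1" using assms(2) by simp
    then obtain m0 where m0: "l \<le> m0" "m0 \<le> j - 1" "inP T B l m0" "F T B l (j - 1) = val T B m0"
      "\<forall>m1. m0 < m1 \<and> m1 \<le> j - 1 \<longrightarrow> \<not> inP T B l m1"
      using F_last[of B l "j - 1" T] assms(1) by blast
    have "most_recent_loc ?P (j, i) = (m0, lowest B m0)"
    proof (rule mrl_eq)
      show "(m0, lowest B m0) \<in> ?P" using P m0 assms by auto
      have "m0 < j" using m0(2) assms(2) by linarith
      then show "rd_less (m0, lowest B m0) (j, i)" by (simp add: rd_less_def)
      show "\<forall>p'\<in>?P. rd_less p' (j, i) \<longrightarrow> p' = (m0, lowest B m0) \<or> rd_less p' (m0, lowest B m0)"
      proof (intro ballI impI)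
        fix p' assume "p' \<in> ?P" "rd_less p' (j, i)"
        then obtain c where c: "p' = (c, lowest B c)" "l \<le> c" "inP T B l c"
          "c < j \<or> (c = j \<and> i < lowest B c)"
          unfolding P rd_less_def by auto
        have "c \<noteq> j" using c False by auto
        then have "c \<le> j - 1" using c by auto
        then have "\<not> m0 < c" using m0(5) c(3) by blast
        then show "p' = (m0, lowest B m0) \<or> rd_less p' (m0, lowest B m0)"
          using c by (auto simp: rd_less_def)
      qed
    qed
    moreover have "MV T B l j i = F T B l (j - 1)" using False unfolding MV_def by (metis (full_types))
    ultimately show ?thesis using m0(4) by (simp add: most_recent_val_def val_def)
  qed
qed

lemma part_mono:
  assumes "is_partition n lam" "1 \<le> a" "a \<le> b" "b \<le> n"
  shows "lam b \<le> lam a"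
  using assms(3,4)
proof (induction b rule: dec_induct)
  case base then show ?case by simp
next
  case (step k)
  then have "lam (Suc k) \<le> lam k" using assms(1,2) unfolding is_partition_def by auto
  then show ?case using step by simp
qed

lemma col_strict:
  assumes "is_partition n lam" "semistandard n lam T"
    "(c, a) \<in> boxes n lam" "(c, b) \<in> boxes n lam" "a < b"
  shows "T c a < T c b"
proof -
  have "Suc a \<le> b" using assms(5) by simp
  then have "(c, b) \<in> boxes n lam \<longrightarrow> T c a < T c b"
  proof (induction b rule: dec_induct)
    case base
    then show ?case using assms(2,3) unfolding semistandard_def by blast
  next
    case (step k)
    show ?case
    proof
      assume h: "(c, Suc k) \<in> boxes n lam"
      have "lam (Suc k) \<le> lam k" using part_mono[OF assms(1), of k "Suc k"] h step.hyps assms(3)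
        by (auto simp: boxes_def)
      then have hk: "(c, k) \<in> boxes n lam" using h step.hyps assms(3) by (auto simp: boxes_def)
      then have "T c k < T c (Suc k)" using h assms(2) unfolding semistandard_def by blast
      then show "T c a < T c (Suc k)" using step.IH hk by simp
    qed
  qed
  then show ?thesis using assms(4) by simp
qed

lemma finite_col: "B \<subseteq> boxes n lam \<Longrightarrow> finite {i. (j, i) \<in> B}"
  by (rule finite_subset[of _ "{..n}"]) (auto simp: boxes_def)

lemma lowest_in: "B \<subseteq> boxes n lam \<Longrightarrow> ne B j \<Longrightarrow> (j, lowest B j) \<in> B"
  unfolding lowest_def ne_def using Max_in[OF finite_col[of B n lam j]] by auto

lemma col_after:
  assumes "ne B l" "l \<le> lam 1" "l \<le> c" "c \<le> lam 1"
  shows "{i. (c, i) \<in> B - scan_path_of lam T B l} =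
     (if inP T B l c then {i. (c, i) \<in> B} - {lowest B c} else {i. (c, i) \<in> B})"
proof -
  have mem: "\<And>i. (c, i) \<in> scan_path_of lam T B l \<longleftrightarrow> inP T B l c \<and> i = lowest B c"
    using scan_path_char[of B l lam T] assms by auto
  show ?thesis by (auto simp: mem)
qed

locale setting =
  fixes n lam T l B
  assumes part: "is_partition n lam" and ss: "semistandard n lam T"
    and sub: "B \<subseteq> boxes n lam" and nel: "ne B l" and ll: "l \<le> lam 1"
begin

definition "B' = B - scan_path_of lam T B l"

lemma sub': "B' \<subseteq> boxes n lam" using sub by (auto simp: B'_def)

lemma ne'_ne: "ne B' c \<Longrightarrow> ne B c"
  by (auto simp: ne_def B'_def)

lemma notin_same:
  assumes "l \<le> c" "c \<le> lam 1" "\<not> inP T B l c"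
  shows "ne B' c = ne B c" "val T B' c = val T B c"
proof -
  have "{i. (c, i) \<in> B'} = {i. (c, i) \<in> B}"
    using col_after[where B=B and l=l and lam=lam and c=c and T=T, OF nel ll assms(1,2)] assms(3) by (simp add: B'_def)
  then show "ne B' c = ne B c" "val T B' c = val T B c"
    unfolding ne_def val_def lowest_def by (blast, simp)
qed

lemma lowest_le:
  assumes "ne B' c"
  shows "lowest B' c \<le> lowest B c"
proof -
  have "{i. (c, i) \<in> B'} \<subseteq> {i. (c, i) \<in> B}" by (auto simp: B'_def)
  moreover have "{i. (c, i) \<in> B'} \<noteq> {}" using assms by (auto simp: ne_def)
  ultimately show ?thesis unfolding lowest_def
    using Max_mono finite_col[OF sub] by blast
qed

lemma in_less:
  assumes "l \<le> c" "c \<le> lam 1" "inP T B l c" "ne B' c"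
  shows "val T B' c < val T B c"
proof -
  have col: "{i. (c, i) \<in> B'} = {i. (c, i) \<in> B} - {lowest B c}"
    using col_after[where B=B and l=l and lam=lam and c=c and T=T, OF nel ll assms(1,2)] assms(3) by (simp add: B'_def)
  have a: "(c, lowest B' c) \<in> B'" using lowest_in[OF sub' assms(4)] .
  then have "lowest B' c \<noteq> lowest B c" using col by auto
  then have lt: "lowest B' c < lowest B c" using lowest_le[OF assms(4)] by simp
  have "ne B c" using assms(3) by (simp add: inP_def)
  then have b: "(c, lowest B c) \<in> B" using lowest_in[OF sub] by blast
  have a': "(c, lowest B' c) \<in> boxes n lam" using a sub' by blast
  have b': "(c, lowest B c) \<in> boxes n lam" using b sub by blast
  show ?thesis unfolding val_def
    by (rule col_strict[OF part ss a' b' lt])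
qed

lemma F_less:
  assumes ne': "ne B' l" and "l \<le> m" "m \<le> lam 1"
  shows "F T B' l m < F T B l m"
proof -
  have "m \<le> lam 1 \<longrightarrow> F T B' l m < F T B l m"
    using assms(2)
  proof (induction m rule: dec_induct)
    case base
    have "inP T B l l" using nel by (simp add: inP_def)
    then have "val T B' l < val T B l" using in_less[OF order.refl ll _ ne'] by blast
    then show ?case by (simp add: F_le)
  next
    case (step k)
    show ?case
    proof
      assume sk: "Suc k \<le> lam 1"
      have ih: "F T B' l k < F T B l k" using step.IH sk by simp
      have lk: "l \<le> Suc k" "l < Suc k" using step.hyps by simp_all
      have e': "F T B' l (Suc k) = (if ne B' (Suc k) \<and> F T B' l k \<le> val T B' (Suc k)
          then val T B' (Suc k) else F T B' l k)" using F_Suc_gt step.hyps by blast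
      have e: "F T B l (Suc k) = (if ne B (Suc k) \<and> F T B l k \<le> val T B (Suc k)
          then val T B (Suc k) else F T B l k)" using F_Suc_gt step.hyps by blast
      have ip: "inP T B l (Suc k) \<longleftrightarrow> ne B (Suc k) \<and> F T B l k \<le> val T B (Suc k)"
        using lk unfolding inP_def by auto
      show "F T B' l (Suc k) < F T B l (Suc k)"
      proof (cases "ne B' (Suc k) \<and> F T B' l k \<le> val T B' (Suc k)")
        case True
        then have e1: "F T B' l (Suc k) = val T B' (Suc k)" using e' by simp
        show ?thesis
        proof (cases "inP T B l (Suc k)")
          case True2: True
          then have "F T B l (Suc k) = val T B (Suc k)" using e ip by simp
          moreover have "val T B' (Suc k) < val T B (Suc k)"
            using in_less[OF lk(1) sk True2] True by blast
          ultimately show ?thesis using e1 by simp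
        next
          case False
          then have n1: "ne B' (Suc k) = ne B (Suc k)" and n2: "val T B' (Suc k) = val T B (Suc k)"
            using notin_same[OF lk(1) sk] by blast+
          have "\<not> F T B l k \<le> val T B (Suc k)" using False ip True n1 by blast
          then have "F T B l (Suc k) = F T B l k" using e by simp
          then show ?thesis using e1 n2 \<open>\<not> F T B l k \<le> val T B (Suc k)\<close> by linarith
        qed
      next
        case False
        then have "F T B' l (Suc k) = F T B' l k" using e' by (simp only: if_False)
        moreover have "F T B l k \<le> F T B l (Suc k)" using F_mono1[of l k T B] step.hyps by simp
        ultimately show ?thesis using ih by linarith
      qed
    qed
  qed
  then show ?thesis using assms(3) by simp
qed

lemma MV_less:
  assumes ne': "ne B' l" and "l < j" "j \<le> lam 1"
  shows "MV T B' l j i < MV T B l j i"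
proof (cases "inP T B' l j \<and> i < lowest B' j")
  case True
  then have m': "MV T B' l j i = F T B' l j" unfolding MV_def by (rule if_P)
  have lt: "F T B' l j < F T B l j" using F_less[OF ne'] assms by simp
  show ?thesis
  proof (cases "inP T B l j")
    case True2: True
    have "ne B' j" using True by (simp add: inP_def)
    then have "lowest B' j \<le> lowest B j" using lowest_le by blast
    then have "inP T B l j \<and> i < lowest B j" using True True2 by linarith
    then have "MV T B l j i = F T B l j" unfolding MV_def by (rule if_P)
    then show ?thesis using m' lt by simp
  next
    case False
    have "ne B j" using True ne'_ne by (simp add: inP_def)
    then have nf: "\<not> F T B l (j - 1) \<le> val T B j" using False assms(2) unfolding inP_def by blast
    obtain j' where j': "j = Suc j'" "l \<le> j'" using assms(2) by (cases j) auto
    have "F T B l j = F T B l (j - 1)"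
      using F_Suc_gt[OF j'(2), of T B] nf unfolding j' by simp
    moreover have "\<not> (inP T B l j \<and> i < lowest B j)" using False by blast
    then have "MV T B l j i = F T B l (j - 1)" unfolding MV_def by (rule if_not_P)
    ultimately show ?thesis using m' lt by simp
  qed
next
  case False
  then have m': "MV T B' l j i = F T B' l (j - 1)" unfolding MV_def by (rule if_not_P)
  have lt: "F T B' l (j - 1) < F T B l (j - 1)" using F_less[OF ne'] assms by simp
  have "F T B l (j - 1) \<le> F T B l j" using F_mono[of l "j - 1" j T B] assms by simp
  then have "F T B l (j - 1) \<le> MV T B l j i" unfolding MV_def by (cases "inP T B l j \<and> i < lowest B j") simp_all
  then show ?thesis using m' lt by simp
qed

lemma card_col:
  assumes "l \<le> lam 1"
  shows "card {i. (l, i) \<in> B'} = card {i. (l, i) \<in> B} - 1"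
proof -
  have "inP T B l l" using nel by (simp add: inP_def)
  then have col: "{i. (l, i) \<in> B'} = {i. (l, i) \<in> B} - {lowest B l}"
    using col_after[where B=B and l=l and lam=lam and c=l and T=T, OF nel ll order.refl ll] by (simp add: B'_def)
  have "lowest B l \<in> {i. (l, i) \<in> B}" using lowest_in[OF sub nel] by simp
  then show ?thesis using col finite_col[OF sub] by simp
qed

end

definition Bm :: "nat \<Rightarrow> (nat \<Rightarrow> nat) \<Rightarrow> (nat \<Rightarrow> nat \<Rightarrow> nat) \<Rightarrow> nat \<Rightarrow> nat \<Rightarrow> (nat \<times> nat) set" where
  "Bm n lam T l m = boxes n lam - removed n lam T l m"

lemma Bm_Suc: "Bm n lam T l (Suc m) = Bm n lam T l m - scan_path_of lam T (Bm n lam T l m) l"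
  unfolding Bm_def by auto

lemma Bm_card:
  assumes part: "is_partition n lam" and ss: "semistandard n lam T" and ll: "l \<le> lam 1"
  shows "m \<le> col_len n lam l \<Longrightarrow> card {i. (l, i) \<in> Bm n lam T l m} = col_len n lam l - m"
proof (induction m)
  case 0
  then show ?case by (simp add: Bm_def col_len_def)
next
  case (Suc m)
  then have c: "card {i. (l, i) \<in> Bm n lam T l m} = col_len n lam l - m" by simp
  then have "card {i. (l, i) \<in> Bm n lam T l m} > 0" using Suc.prems by simp
  then have "ne (Bm n lam T l m) l" unfolding ne_def by (metis card.empty empty_Collect_eq less_irrefl)
  then interpret setting n lam T l "Bm n lam T l m"
    using part ss ll by unfold_locales (auto simp: Bm_def)
  have "card {i. (l, i) \<in> B'} = card {i. (l, i) \<in> Bm n lam T l m} - 1"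
    using card_col ll by blast
  then show ?case using c by (simp add: B'_def Bm_Suc)
qed

lemma Bm_ne:
  assumes part: "is_partition n lam" and ss: "semistandard n lam T" and ll: "l \<le> lam 1"
    and "m < col_len n lam l"
  shows "ne (Bm n lam T l m) l"
proof -
  have "card {i. (l, i) \<in> Bm n lam T l m} > 0" using Bm_card[OF part ss ll, of m] assms(4) by simp
  then show ?thesis unfolding ne_def by (metis card.empty empty_Collect_eq less_irrefl)
qed

lemma V_step:
  assumes part: "is_partition n lam" and ss: "semistandard n lam T" and ll: "l \<le> lam 1"
    and "Suc m < col_len n lam l" and "l < j" "j \<le> lam 1"
  shows "MV T (Bm n lam T l (Suc m)) l j i < MV T (Bm n lam T l m) l j i"
proof -
  have "ne (Bm n lam T l m) l" using Bm_ne[OF part ss ll] assms(4) by simp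
  then interpret setting n lam T l "Bm n lam T l m"
    using part ss ll by unfold_locales (auto simp: Bm_def)
  have "ne B' l" using Bm_ne[OF part ss ll, of "Suc m"] assms(4) by (simp add: B'_def Bm_Suc)
  then have "MV T B' l j i < MV T (Bm n lam T l m) l j i" using MV_less assms by blast
  then show ?thesis by (simp add: B'_def Bm_Suc)
qed

lemma V_chain:
  assumes part: "is_partition n lam" and ss: "semistandard n lam T" and ll: "l \<le> lam 1"
    and "a < b" "b < col_len n lam l" and "l < j" "j \<le> lam 1"
  shows "MV T (Bm n lam T l b) l j i < MV T (Bm n lam T l a) l j i"
proof -
  have "Suc a \<le> b" using assms(4) by simp
  then have "b < col_len n lam l \<longrightarrow> MV T (Bm n lam T l b) l j i < MV T (Bm n lam T l a) l j i"
  proof (induction b rule: dec_induct)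
    case base
    then show ?case using V_step[OF part ss ll _ assms(6,7)] by blast
  next
    case (step k)
    show ?case
    proof
      assume sk: "Suc k < col_len n lam l"
      have "MV T (Bm n lam T l (Suc k)) l j i < MV T (Bm n lam T l k) l j i"
        using V_step[OF part ss ll sk assms(6,7)] .
      moreover have "MV T (Bm n lam T l k) l j i < MV T (Bm n lam T l a) l j i"
        using step.IH sk by simp
      ultimately show "MV T (Bm n lam T l (Suc k)) l j i < MV T (Bm n lam T l a) l j i" by simp
    qed
  qed
  then show ?thesis using assms(5) by simp
qed

theorem lemma3p1:
  fixes n :: nat and lam :: "nat \<Rightarrow> nat" and T :: "nat \<Rightarrow> nat \<Rightarrow> nat"
    and l j i h k :: nat
  assumes "n \<ge> 1"
    and "is_partition n lam"
    and "semistandard n lam T"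
    and "1 \<le> l" and "l < lam 1"
    and "(j, i) \<in> boxes n lam"
    and "rd_less (l, 1) (j, i)"
    and "1 \<le> h" and "h < k" and "k \<le> col_len n lam l"
  shows "most_recent_val T (scan_path n lam T l h) (j, i)
           < most_recent_val T (scan_path n lam T l k) (j, i)"
  proof -
  note part = assms(2) and ss = assms(3)
  have i1: "1 \<le> i" "i \<le> n" "j \<le> lam i" using assms(6) by (auto simp: boxes_def)
  have "lam i \<le> lam 1" using part_mono[OF part, of 1 i] i1 by simp
  then have jl: "j \<le> lam 1" using i1 by simp
  have lj: "l < j" using assms(7) i1 by (auto simp: rd_less_def)
  have ll: "l \<le> lam 1" using assms(5) by simp
  define c where "c = col_len n lam l"
  have sp: "\<And>k. scan_path n lam T l k = scan_path_of lam T (Bm n lam T l (c - k)) l"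
    by (simp add: scan_path_def Bm_def c_def)
  have mv: "most_recent_val T (scan_path n lam T l k') (j, i) = MV T (Bm n lam T l (c - k')) l j i"
    if "1 \<le> k'" "k' \<le> c" for k'
  proof -
    have "ne (Bm n lam T l (c - k')) l" using Bm_ne[OF part ss ll, of "c - k'"] that c_def by simp
    then show ?thesis unfolding sp using mrv_MV lj jl by blast
  qed
  have "MV T (Bm n lam T l (c - h)) l j i < MV T (Bm n lam T l (c - k)) l j i"
    using V_chain[OF part ss ll, of "c - k" "c - h" j i] assms(8,9,10) lj jl c_def by simp
  then show ?thesis using mv[of h] mv[of k] assms(8,9,10) c_def by simp
qed

end
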